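(* Let $p>3$ be a prime and $X=\mathbb{Z}(p)$. Then there exist independent random variables $\xi_1,\xi_2,\xi_3,\xi_4$ with values in $X$ and distributions $\mu_1,\mu_2,\mu_3,\mu_4$ such that the conditional distribution of $L_2=\xi_1+\xi_2+2\xi_3+2\xi_4$ given $L_1=\xi_1+\xi_2+\xi_3+\xi_4$ is symmetric and $\mu_1,\mu_2,\mu_3,\mu_4\notin I(X)$.
   Context: $\mathbb{Z}(p)$ is the cyclic group of order $p$. $I(X)$ is the set of shifts of Haar distributions $m_K$ of subgroups $K$ of $X$. For random variables $L_1,L_2$ with values in $X$, the conditional distribution of $L_2$ given $L_1$ is called symmetric if the pairs $(L_1,L_2)$ and $(L_1,-L_2)$ are identically distributed. *)

theory Defs
  imports "HOL-Probability.Probability"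
begin

text \<open>The cyclic group Z(p) is represented by the residues {0..<p} :: int set,
  with group operation addition modulo p.\<close>

definition Zp :: "int \<Rightarrow> int set" where
  "Zp p = {0..<p}"

definition zp_subgroup :: "int \<Rightarrow> int set \<Rightarrow> bool" where
  "zp_subgroup p K \<longleftrightarrow> K \<subseteq> Zp p \<and> 0 \<in> K \<and>
     (\<forall>a\<in>K. \<forall>b\<in>K. (a + b) mod p \<in> K) \<and> (\<forall>a\<in>K. (- a) mod p \<in> K)"

text \<open>I(X): shifts of Haar (uniform) distributions m_K of subgroups K of X = Z(p).\<close>
definition I_Zp :: "int \<Rightarrow> int pmf set" where
  "I_Zp p = {pmf_of_set ((\<lambda>k. (x + k) mod p) ` K) | x K. x \<in> Zp p \<and> zp_subgroup p K}"

end

theory Submission imports Defs begin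


lemma cis_sum_zero:
  fixes n :: nat and k m :: int
  assumes n: "n > 0" and nd: "\<not> int n dvd k"
  shows "(\<Sum>x<n. cis (2*pi*(k * int x + m)/n)) = 0"
proof -
  define \<omega> where "\<omega> = cis (2*pi*k/n)"
  have w1: "\<omega> \<noteq> 1"
  proof
    assume "\<omega> = 1"
    hence "cos (2*pi*k/n) = 1" by (simp add: \<omega>_def complex_eq_iff)
    then obtain j :: int where "2*pi*k/n = j*2*pi" by (auto simp: cos_one_2pi_int)
    hence "real_of_int k = real_of_int (j * int n)" using n by (simp add: field_simps)
    hence "k = j * int n" by (simp only: of_int_eq_iff)
    thus False using nd by simp
  qed
  have wn: "\<omega> ^ n = 1"
  proof -
    have "\<omega> ^ n = cis (real n * (2*pi*k/n))" unfolding \<omega>_def by (rule Complex.DeMoivre)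
    also have "real n * (2*pi*k/n) = 2*pi*k" using n by simp
    also have "cis (2*pi*k) = 1" by (rule Complex.cis_multiple_2pi) simp
    finally show ?thesis .
  qed
  have "(\<Sum>x<n. cis (2*pi*(k * int x + m)/n)) = (\<Sum>x<n. cis (2*pi*m/n) * \<omega> ^ x)"
    by (intro sum.cong refl) (simp add: \<omega>_def Complex.DeMoivre cis_mult field_simps)
  also have "\<dots> = cis (2*pi*m/n) * ((\<omega> ^ n - 1) / (\<omega> - 1))"
    by (simp add: sum_distrib_left[symmetric] geometric_sum w1)
  also have "\<dots> = 0" by (simp add: wn)
  finally show ?thesis .
qed

lemma cos_sum_zero:
  fixes p k m :: int
  assumes p: "p > 0" and nd: "\<not> p dvd k"
  shows "(\<Sum>x\<in>{0..<p}. cos (2*pi*(k * x + m)/p)) = 0"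
proof -
  obtain n where pn: "p = int n" "n > 0" using p by (metis int_ops(1) less_imp_of_nat_less zero_less_imp_eq_int)
  have "{0..<p} = int ` {..<n}" using pn image_int_atLeastLessThan[of 0 n] by (simp add: atLeast0LessThan)
  hence "(\<Sum>x\<in>{0..<p}. cos (2*pi*(k * x + m)/p)) = (\<Sum>x<n. cos (2*pi*(k * int x + m)/n))"
    using pn by (simp add: sum.reindex)
  also have "\<dots> = Re (\<Sum>x<n. cis (2*pi*(k * int x + m)/n))" by (simp add: Re_sum)
  also have "\<dots> = 0" using cis_sum_zero[of n k m] pn nd by simp
  finally show ?thesis .
qed

lemma cos_sum_zero':
  fixes p k m :: int
  assumes p: "p > 0" and nd: "\<not> p dvd k" and f: "\<And>x. f x = 2*pi*(k * x + m)/p"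
  shows "(\<Sum>x\<in>{0..<p}. cos (f x)) = 0"
  using cos_sum_zero[OF p nd, of m] f by simp

lemma cos_mod:
  fixes p j y :: int
  assumes p: "p > 0"
  shows "cos (2*pi*(j * (y mod p))/p) = cos (2*pi*(j*y)/p)"
proof -
  have "y mod p = y - p * (y div p)" by (metis minus_mult_div_eq_mod)
  hence e: "real_of_int (y mod p) = real_of_int y - real_of_int p * real_of_int (y div p)"
    by (metis of_int_diff of_int_mult)
  have "2*pi*(j * (y mod p))/p = 2*pi*(j*y)/p - 2*pi * of_int (j * (y div p))"
    using p by (simp only: of_int_mult e) (simp add: field_simps)
  thus ?thesis by (simp only: cos_diff cos_int_2pin sin_int_2pin)
qed

definition rho :: "int \<Rightarrow> int \<Rightarrow> int \<Rightarrow> real" where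
  "rho p j x = (if x \<in> Zp p then (1 + cos (2*pi*(j*x)/p))/p else 0)"

definition mu :: "int \<Rightarrow> int \<Rightarrow> int pmf" where
  "mu p j = embed_pmf (rho p j)"

lemma rho_nonneg: "p > 0 \<Longrightarrow> rho p j x \<ge> 0"
  by (auto simp: rho_def intro!: divide_nonneg_pos) (smt (verit) cos_ge_minus_one)

lemma rho_sum: assumes "p > 0" "\<not> p dvd j" shows "(\<Sum>x\<in>Zp p. rho p j x) = 1"
proof -
  have "(\<Sum>x\<in>Zp p. rho p j x) = (\<Sum>x\<in>{0..<p}. 1/p + cos (2*pi*(j*x)/p) / p)"
    by (intro sum.cong) (auto simp: rho_def Zp_def add_divide_distrib)
  also have "\<dots> = real (nat p) / p + (\<Sum>x\<in>{0..<p}. cos (2*pi*(j*x)/p)) / p"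
    by (simp add: sum.distrib sum_divide_distrib)
  also have "(\<Sum>x\<in>{0..<p}. cos (2*pi*(j*x)/p)) = 0"
    by (rule cos_sum_zero'[OF assms, of _ 0]) simp
  finally show ?thesis using assms by simp
qed

lemma pmf_mu: assumes "p > 0" "\<not> p dvd j" shows "pmf (mu p j) x = rho p j x"
  unfolding mu_def
proof (rule pmf_embed_pmf)
  show "\<And>x. 0 \<le> rho p j x" using assms rho_nonneg by auto
  have "(\<integral>\<^sup>+x. ennreal (rho p j x) \<partial>count_space UNIV) = (\<Sum>x\<in>Zp p. ennreal (rho p j x))"
    by (rule nn_integral_count_space') (auto simp: Zp_def rho_def)
  also have "\<dots> = ennreal (\<Sum>x\<in>Zp p. rho p j x)"
    using rho_nonneg assms by (intro sum_ennreal) auto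
  also have "\<dots> = 1" using rho_sum[OF assms] by simp
  finally show "(\<integral>\<^sup>+x. ennreal (rho p j x) \<partial>count_space UNIV) = 1" .
qed

lemma set_mu: assumes "p > 0" "\<not> p dvd j" shows "set_pmf (mu p j) \<subseteq> Zp p"
  using pmf_mu[OF assms] by (auto simp: set_pmf_iff rho_def split: if_splits)

lemma prime_facts:
  fixes p :: int assumes "prime p" "p > 3"
  shows "p > 0" "\<not> p dvd 1" "\<not> p dvd 2" "\<not> p dvd 3" "\<not> p dvd -1" "\<not> p dvd -2"
  using assms zdvd_imp_le[of p 2] zdvd_imp_le[of p 3] zdvd_imp_le[of p 1] by auto

lemma conv_uniform:
  fixes p :: int assumes pr: "prime p" "p > 3"
  shows "map_pmf (\<lambda>(a,b). (a+b) mod p) (pair_pmf (mu p 1) (mu p 2)) = pmf_of_set (Zp p)"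
proof (rule pmf_eqI)
  fix c
  note pf = prime_facts[OF pr]
  let ?P = "pair_pmf (mu p 1) (mu p 2)"
  let ?f = "\<lambda>(a,b). (a+b) mod p"
  have Zne: "Zp p \<noteq> {}" "finite (Zp p)" using pf(1) by (auto simp: Zp_def)
  define T where "T = {ab \<in> Zp p \<times> Zp p. ?f ab = c}"
  have sP: "set_pmf ?P \<subseteq> Zp p \<times> Zp p"
    using set_mu[OF pf(1) pf(2)] set_mu[OF pf(1) pf(3)] by (auto simp: set_pair_pmf)
  have finT: "finite T" unfolding T_def Zp_def by auto
  have "pmf (map_pmf ?f ?P) c = measure ?P (?f -` {c})" by (rule pmf_map)
  also have "\<dots> = measure ?P (?f -` {c} \<inter> set_pmf ?P)" by (rule measure_Int_set_pmf[symmetric])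
  also have "?f -` {c} \<inter> set_pmf ?P = T \<inter> set_pmf ?P" using sP unfolding T_def by auto
  also have "measure ?P \<dots> = measure ?P T" by (rule measure_Int_set_pmf)
  also have "\<dots> = (\<Sum>ab\<in>T. pmf ?P ab)" using finT by (rule measure_measure_pmf_finite)
  also have "\<dots> = (\<Sum>(a,b)\<in>T. rho p 1 a * rho p 2 b)"
    by (intro sum.cong refl) (auto simp: pmf_pair pmf_mu[OF pf(1) pf(2)] pmf_mu[OF pf(1) pf(3)])
  also have "\<dots> = pmf (pmf_of_set (Zp p)) c"
  proof (cases "c \<in> Zp p")
    case False
    hence "T = {}" using pf(1) unfolding T_def Zp_def by auto
    thus ?thesis using False Zne by simp
  next
    case True
    have TT: "T = (\<lambda>a. (a, (c-a) mod p)) ` Zp p"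
    proof (rule set_eqI, rule iffI)
      fix ab assume "ab \<in> T"
      then obtain a b where ab: "ab = (a,b)" "a \<in> Zp p" "b \<in> Zp p" "(a+b) mod p = c"
        unfolding T_def by auto
      have "b = b mod p" using ab(3) by (simp add: Zp_def)
      also have "b mod p = (c - a) mod p" using ab(4) by (metis add_diff_cancel_left' mod_diff_left_eq)
      finally show "ab \<in> (\<lambda>a. (a, (c-a) mod p)) ` Zp p" using ab by auto
    next
      fix ab assume "ab \<in> (\<lambda>a. (a, (c-a) mod p)) ` Zp p"
      then obtain a where a: "ab = (a, (c-a) mod p)" "a \<in> Zp p" by auto
      have "(a + (c - a) mod p) mod p = c mod p" by (simp add: mod_add_right_eq)
      also have "\<dots> = c" using True by (simp add: Zp_def)
      finally show "ab \<in> T" using a pf(1) unfolding T_def by (auto simp: Zp_def)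
    qed
    have inj: "inj_on (\<lambda>a. (a, (c-a) mod p)) (Zp p)" by (auto intro: inj_onI)
    define A where "A = (\<lambda>a::int. 2*pi*(1*a)/p)"
    define B where "B = (\<lambda>a::int. 2*pi*(2*(c-a))/p)"
    have "(\<Sum>(a,b)\<in>T. rho p 1 a * rho p 2 b) = (\<Sum>a\<in>Zp p. rho p 1 a * rho p 2 ((c-a) mod p))"
      unfolding TT by (simp add: sum.reindex[OF inj])
    also have "\<dots> = (\<Sum>a\<in>{0..<p}. (1 + cos (A a) + cos (B a) + (cos (A a - B a) + cos (A a + B a))/2) / p^2)"
    proof (rule sum.cong)
      show "Zp p = {0..<p}" by (simp add: Zp_def)
    next
      fix a assume a0: "a \<in> {0..<p}"
      hence a: "a \<in> Zp p" by (simp add: Zp_def)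
      have "(c-a) mod p \<in> Zp p" using pf(1) by (simp add: Zp_def)
      hence "rho p 1 a * rho p 2 ((c-a) mod p) = (1 + cos (A a)) * (1 + cos (2*pi*(2*((c-a) mod p))/p)) / p^2"
        using a by (simp add: rho_def A_def power2_eq_square)
      also have "cos (2*pi*(2*((c-a) mod p))/p) = cos (B a)" unfolding B_def by (rule cos_mod[OF pf(1)])
      finally show "rho p 1 a * rho p 2 ((c-a) mod p) = (1 + cos (A a) + cos (B a) + (cos (A a - B a) + cos (A a + B a))/2) / p^2"
        by (simp add: cos_times_cos algebra_simps)
    qed
    also have "\<dots> = ((\<Sum>a\<in>{0..<p}. 1) + (\<Sum>a\<in>{0..<p}. cos (A a)) + (\<Sum>a\<in>{0..<p}. cos (B a))
        + ((\<Sum>a\<in>{0..<p}. cos (A a - B a)) + (\<Sum>a\<in>{0..<p}. cos (A a + B a)))/2) / p^2"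
      by (simp add: sum_divide_distrib[symmetric] sum.distrib)
    also have "(\<Sum>a\<in>{0..<p}. cos (A a)) = 0"
      by (rule cos_sum_zero'[OF pf(1) pf(2), of _ 0]) (simp add: A_def)
    also have "(\<Sum>a\<in>{0..<p}. cos (B a)) = 0"
      by (rule cos_sum_zero'[OF pf(1) pf(6), of _ "2*c"]) (use pf(1) in \<open>simp add: B_def field_simps\<close>)
    also have "(\<Sum>a\<in>{0..<p}. cos (A a - B a)) = 0"
      by (rule cos_sum_zero'[OF pf(1) pf(4), of _ "-2*c"]) (use pf(1) in \<open>simp add: A_def B_def field_simps\<close>)
    also have "(\<Sum>a\<in>{0..<p}. cos (A a + B a)) = 0"
      by (rule cos_sum_zero'[OF pf(1) pf(5), of _ "2*c"]) (use pf(1) in \<open>simp add: A_def B_def field_simps\<close>)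
    also have "((\<Sum>a\<in>{0..<p}. (1::real)) + 0 + 0 + (0 + 0)/2) / p^2 = 1 / p"
      using pf(1) by (simp add: power2_eq_square)
    also have "1 / p = pmf (pmf_of_set (Zp p)) c"
      using True pf(1) Zne by (simp add: Zp_def)
    finally show ?thesis .
  qed
  finally show "pmf (map_pmf ?f ?P) c = pmf (pmf_of_set (Zp p)) c" .
qed



lemma Pi4:
  "map_pmf (\<lambda>\<omega>. (\<omega> 1, \<omega> 2, \<omega> 3, \<omega> 4)) (Pi_pmf {1..4::nat} d \<mu>) =
   pair_pmf (\<mu> 1) (pair_pmf (\<mu> 2) (pair_pmf (\<mu> 3) (\<mu> 4)))"
proof -
  have e: "{1..4::nat} = insert 1 (insert 2 (insert 3 (insert 4 {})))" by auto
  show ?thesis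
    unfolding e
    by (simp add: Pi_pmf_insert pmf.map_comp o_def pair_map_pmf2 pair_return_pmf2 case_prod_beta apsnd_def map_prod_def
        cong: map_pmf_cong)
qed

lemma pair_pmf_of_set:
  assumes "finite A" "A \<noteq> {}" "finite B" "B \<noteq> {}"
  shows "pair_pmf (pmf_of_set A) (pmf_of_set B) = pmf_of_set (A \<times> B)"
proof (rule pmf_eqI)
  fix x :: "'a \<times> 'b"
  obtain a b where x: "x = (a,b)" by (cases x)
  show "pmf (pair_pmf (pmf_of_set A) (pmf_of_set B)) x = pmf (pmf_of_set (A \<times> B)) x"
    using assms unfolding x by (simp add: pmf_pair card_cartesian_product indicator_def)
qed

lemma inj_aux:
  fixes p a b a' b' :: int
  assumes "p > 0" "a \<in> Zp p" "b \<in> Zp p" "a' \<in> Zp p" "b' \<in> Zp p"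
    and "p dvd (a + b) - (a' + b')" "p dvd (a + 2*b) - (a' + 2*b')"
  shows "a = a' \<and> b = b'"
proof -
  have "p dvd ((a + 2*b) - (a' + 2*b')) - ((a + b) - (a' + b'))" using assms(6,7) by (rule dvd_diff[rotated])
  hence db: "p dvd b - b'" by (simp add: algebra_simps)
  hence "p dvd ((a + b) - (a' + b')) - (b - b')" using assms(6) by (rule dvd_diff[rotated])
  hence da: "p dvd a - a'" by (simp add: algebra_simps)
  have "a = a mod p" "a' = a' mod p" "b = b mod p" "b' = b' mod p" using assms(2-5) by (auto simp: Zp_def)
  thus ?thesis using da db by (metis mod_eq_dvd_iff)
qed

lemma mu_not_I:
  fixes p j :: int assumes pr: "prime p" "p > 3" and j: "\<not> p dvd j"
  shows "mu p j \<notin> I_Zp p"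
proof
  assume "mu p j \<in> I_Zp p"
  then obtain x K where xK: "mu p j = pmf_of_set ((\<lambda>k. (x + k) mod p) ` K)" "x \<in> Zp p" "zp_subgroup p K"
    unfolding I_Zp_def by blast
  define S where "S = (\<lambda>k. (x + k) mod p) ` K"
  have p0: "p > 0" using pr by simp
  have "K \<noteq> {}" "finite K" using xK(3) unfolding zp_subgroup_def Zp_def by (auto intro: finite_subset)
  hence S: "S \<noteq> {}" "finite S" unfolding S_def by auto
  have "pmf (mu p j) 0 = rho p j 0" by (rule pmf_mu[OF p0 j])
  also have "\<dots> = 2 / p" using p0 by (simp add: rho_def Zp_def)
  finally have "pmf (pmf_of_set S) 0 = 2 / p" using xK(1) S_def by simp
  hence "indicator S 0 / real (card S) = 2 / p" using S by simp
  moreover have "(2::real) / p \<noteq> 0" using p0 by simp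
  ultimately have "0 \<in> S" by (cases "0 \<in> S") auto
  with \<open>indicator S 0 / real (card S) = 2 / p\<close> have "1 / real (card S) = 2 / p" by simp
  hence "real_of_int p = real_of_int (2 * int (card S))" using p0 S
    by (simp add: field_simps)
  hence "p = 2 * int (card S)" by (simp only: of_int_eq_iff)
  hence "2 dvd p" by simp
  hence "(2::int) = 1 \<or> 2 = p" using pr(1) unfolding prime_int_iff by (meson zero_le_numeral)
  thus False using pr by auto
qed
lemma dm: fixes p x :: int shows "p dvd x mod p - x"
  unfolding mod_eq_dvd_iff[symmetric] by simp
lemma m1: fixes p :: int shows "(x1 mod p + x2 mod p + x3 mod p + x4 mod p) mod p = ((x1+x2) mod p + (x3+x4) mod p) mod p"
proof -
  have "(x1 mod p + x2 mod p + x3 mod p + x4 mod p) - ((x1+x2) mod p + (x3+x4) mod p)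
     = (x1 mod p - x1) + (x2 mod p - x2) + (x3 mod p - x3) + (x4 mod p - x4) - ((x1+x2) mod p - (x1+x2)) - ((x3+x4) mod p - (x3+x4))"
    by simp
  also have "p dvd \<dots>" by (intro dvd_add dvd_diff dm)
  finally show ?thesis by (simp add: mod_eq_dvd_iff)
qed
lemma m2: fixes p :: int shows "(x1 mod p + x2 mod p + 2 * (x3 mod p) + 2 * (x4 mod p)) mod p = ((x1+x2) mod p + 2 * ((x3+x4) mod p)) mod p"
proof -
  have "(x1 mod p + x2 mod p + 2 * (x3 mod p) + 2 * (x4 mod p)) - ((x1+x2) mod p + 2 * ((x3+x4) mod p))
     = (x1 mod p - x1) + (x2 mod p - x2) + 2 * (x3 mod p - x3) + 2 * (x4 mod p - x4) - ((x1+x2) mod p - (x1+x2)) - 2 * ((x3+x4) mod p - (x3+x4))"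
    by (simp add: algebra_simps)
  also have "p dvd \<dots>" by (intro dvd_add dvd_diff dvd_mult dm)
  finally show ?thesis by (simp add: mod_eq_dvd_iff)
qed

lemma uni_map:
  fixes p :: int and f :: "int \<Rightarrow> int"
  assumes p: "p > 0" and finj: "inj_on f (Zp p)" and frng: "f ` Zp p \<subseteq> Zp p"
  shows "map_pmf (\<lambda>(a,b). ((a+b) mod p, f ((a+2*b) mod p))) (pmf_of_set (Zp p \<times> Zp p)) = pmf_of_set (Zp p \<times> Zp p)"
proof -
  let ?G = "\<lambda>(a,b). ((a+b) mod p, f ((a+2*b) mod p))"
  have Zne: "Zp p \<noteq> {}" "finite (Zp p)" using p by (auto simp: Zp_def)
  have mz: "x mod p \<in> Zp p" for x using p by (simp add: Zp_def)
  have inj: "inj_on ?G (Zp p \<times> Zp p)"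
  proof (rule inj_onI, clarify)
    fix a b a' b' assume ins: "a \<in> Zp p" "b \<in> Zp p" "a' \<in> Zp p" "b' \<in> Zp p"
      and e1: "(a+b) mod p = (a'+b') mod p" and e2: "f ((a+2*b) mod p) = f ((a'+2*b') mod p)"
    from e2 have "(a+2*b) mod p = (a'+2*b') mod p" using finj mz by (auto dest: inj_onD)
    hence "p dvd (a + 2*b) - (a' + 2*b')" by (simp add: mod_eq_dvd_iff)
    moreover have "p dvd (a + b) - (a' + b')" using e1 by (simp add: mod_eq_dvd_iff)
    ultimately show "a = a' \<and> b = b'" using inj_aux[OF p ins] by blast
  qed
  have "?G ` (Zp p \<times> Zp p) \<subseteq> Zp p \<times> Zp p" using frng mz by auto
  hence "?G ` (Zp p \<times> Zp p) = Zp p \<times> Zp p" using inj Zne by (intro endo_inj_surj) auto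
  thus ?thesis using map_pmf_of_set_inj[OF inj] Zne by simp
qed



theorem lemma6:
  fixes p :: int
  assumes "prime p" and "p > 3"
  shows "\<exists>(M :: (nat \<Rightarrow> int) measure) (\<xi> :: nat \<Rightarrow> (nat \<Rightarrow> int) \<Rightarrow> int) (\<mu> :: nat \<Rightarrow> int pmf).
     prob_space M \<and>
     (\<forall>i\<in>{1..4}. \<xi> i \<in> measurable M (count_space UNIV)) \<and>
     (\<forall>i\<in>{1..4}. \<forall>\<omega>\<in>space M. \<xi> i \<omega> \<in> Zp p) \<and>
     prob_space.indep_vars M (\<lambda>_. count_space UNIV) \<xi> {1..4} \<and>
     (\<forall>i\<in>{1..4}. distr M (count_space UNIV) (\<xi> i) = measure_pmf (\<mu> i)) \<and>
     (let L1 = (\<lambda>\<omega>. (\<xi> 1 \<omega> + \<xi> 2 \<omega> + \<xi> 3 \<omega> + \<xi> 4 \<omega>) mod p);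
          L2 = (\<lambda>\<omega>. (\<xi> 1 \<omega> + \<xi> 2 \<omega> + 2 * \<xi> 3 \<omega> + 2 * \<xi> 4 \<omega>) mod p)
      in distr M (count_space UNIV) (\<lambda>\<omega>. (L1 \<omega>, L2 \<omega>)) =
         distr M (count_space UNIV) (\<lambda>\<omega>. (L1 \<omega>, (- L2 \<omega>) mod p))) \<and>
     (\<forall>i\<in>{1..4}. \<mu> i \<notin> I_Zp p)"
proof -
  note pf = prime_facts[OF assms]
  define \<mu> where "\<mu> = (\<lambda>i::nat. if odd i then mu p 1 else mu p 2)"
  define P where "P = Pi_pmf {1..4::nat} 0 \<mu>"
  define \<xi> where "\<xi> = (\<lambda>(i::nat) (\<omega>::nat\<Rightarrow>int). \<omega> i mod p)"
  define U where "U = pmf_of_set (Zp p)"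
  define sm where "sm = (\<lambda>(a::int,b::int). (a+b) mod p)"
  have Zne: "Zp p \<noteq> {}" "finite (Zp p)" using pf(1) by (auto simp: Zp_def)
  have c1: "prob_space (measure_pmf P)" by (rule measure_pmf.prob_space_axioms)
  have c2: "\<forall>i\<in>{1..4}. \<xi> i \<in> measurable (measure_pmf P) (count_space UNIV)" by simp
  have c3: "\<forall>i\<in>{1..4}. \<forall>\<omega>\<in>space (measure_pmf P). \<xi> i \<omega> \<in> Zp p"
    using pf(1) by (simp add: \<xi>_def Zp_def)
  have c4: "prob_space.indep_vars (measure_pmf P) (\<lambda>_. count_space UNIV) \<xi> {1..4}"
  proof -
    have "prob_space.indep_vars (measure_pmf P) (\<lambda>_. count_space UNIV)
            (\<lambda>i x. (\<lambda>i (y::int). y mod p) i ((\<lambda>x f. f x) i x)) {1..4}"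
      unfolding P_def
      by (rule prob_space.indep_vars_compose2[OF measure_pmf.prob_space_axioms indep_vars_Pi_pmf]) auto
    thus ?thesis by (simp add: \<xi>_def)
  qed
  have c5: "\<forall>i\<in>{1..4}. distr (measure_pmf P) (count_space UNIV) (\<xi> i) = measure_pmf (\<mu> i)"
  proof
    fix i :: nat assume i: "i \<in> {1..4}"
    have sm: "set_pmf (\<mu> i) \<subseteq> Zp p" using set_mu[OF pf(1) pf(2)] set_mu[OF pf(1) pf(3)]
      by (auto simp: \<mu>_def)
    have "map_pmf (\<xi> i) P = map_pmf (\<lambda>x. x mod p) (map_pmf (\<lambda>\<omega>. \<omega> i) P)"
      by (simp add: pmf.map_comp o_def \<xi>_def)
    also have "map_pmf (\<lambda>\<omega>. \<omega> i) P = \<mu> i" using i unfolding P_def by (subst Pi_pmf_component) auto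
    also have "map_pmf (\<lambda>x. x mod p) (\<mu> i) = \<mu> i"
      by (rule map_pmf_idI) (use sm in \<open>auto simp: Zp_def\<close>)
    finally show "distr (measure_pmf P) (count_space UNIV) (\<xi> i) = measure_pmf (\<mu> i)"
      by (simp add: map_pmf_rep_eq[symmetric])
  qed
  have c7: "\<forall>i\<in>{1..4}. \<mu> i \<notin> I_Zp p"
    using mu_not_I[OF assms pf(2)] mu_not_I[OF assms pf(3)] by (auto simp: \<mu>_def)
  have AB: "map_pmf (\<lambda>\<omega>. (sm (\<omega> 1, \<omega> 2), sm (\<omega> 3, \<omega> 4))) P = pmf_of_set (Zp p \<times> Zp p)"
  proof -
    have "map_pmf (\<lambda>\<omega>. (sm (\<omega> 1, \<omega> 2), sm (\<omega> 3, \<omega> 4))) P =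
          map_pmf (\<lambda>(a,b,c,d). (sm (a,b), sm (c,d))) (map_pmf (\<lambda>\<omega>. (\<omega> 1, \<omega> 2, \<omega> 3, \<omega> 4)) P)"
      by (simp add: pmf.map_comp o_def)
    also have "map_pmf (\<lambda>\<omega>. (\<omega> 1, \<omega> 2, \<omega> 3, \<omega> 4)) P = 
       pair_pmf (mu p 1) (pair_pmf (mu p 2) (pair_pmf (mu p 1) (mu p 2)))"
      unfolding P_def Pi4 by (simp add: \<mu>_def)
    also have "map_pmf (\<lambda>(a,b,c,d). (sm (a,b), sm (c,d))) \<dots> =
       map_pmf (\<lambda>(x,y). (sm x, sm y)) (pair_pmf (pair_pmf (mu p 1) (mu p 2)) (pair_pmf (mu p 1) (mu p 2)))"
      unfolding pair_pair_pmf by (auto simp: pmf.map_comp o_def intro!: map_pmf_cong)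
    also have "\<dots> = pair_pmf U U"
      unfolding map_pair using conv_uniform[OF assms] by (simp add: sm_def U_def)
    also have "\<dots> = pmf_of_set (Zp p \<times> Zp p)" unfolding U_def using Zne by (simp add: pair_pmf_of_set)
    finally show ?thesis .
  qed
  have gen: "distr (measure_pmf P) (count_space UNIV)
      (\<lambda>\<omega>. ((\<xi> 1 \<omega> + \<xi> 2 \<omega> + \<xi> 3 \<omega> + \<xi> 4 \<omega>) mod p,
              f ((\<xi> 1 \<omega> + \<xi> 2 \<omega> + 2 * \<xi> 3 \<omega> + 2 * \<xi> 4 \<omega>) mod p)))
      = measure_pmf (pmf_of_set (Zp p \<times> Zp p))"
    if finj: "inj_on f (Zp p)" and frng: "f ` Zp p \<subseteq> Zp p" for f
  proof -
    have "(\<lambda>\<omega>. ((\<xi> 1 \<omega> + \<xi> 2 \<omega> + \<xi> 3 \<omega> + \<xi> 4 \<omega>) mod p,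
              f ((\<xi> 1 \<omega> + \<xi> 2 \<omega> + 2 * \<xi> 3 \<omega> + 2 * \<xi> 4 \<omega>) mod p))) =
          (\<lambda>(a,b). ((a+b) mod p, f ((a+2*b) mod p))) \<circ> (\<lambda>\<omega>. (sm (\<omega> 1, \<omega> 2), sm (\<omega> 3, \<omega> 4)))"
      by (rule ext) (unfold \<xi>_def sm_def o_def m1 m2, simp)
    hence "distr (measure_pmf P) (count_space UNIV)
      (\<lambda>\<omega>. ((\<xi> 1 \<omega> + \<xi> 2 \<omega> + \<xi> 3 \<omega> + \<xi> 4 \<omega>) mod p,
              f ((\<xi> 1 \<omega> + \<xi> 2 \<omega> + 2 * \<xi> 3 \<omega> + 2 * \<xi> 4 \<omega>) mod p))) =
       measure_pmf (map_pmf (\<lambda>(a,b). ((a+b) mod p, f ((a+2*b) mod p)))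
         (map_pmf (\<lambda>\<omega>. (sm (\<omega> 1, \<omega> 2), sm (\<omega> 3, \<omega> 4))) P))"
      by (simp add: map_pmf_rep_eq pmf.map_comp)
    also have "\<dots> = measure_pmf (pmf_of_set (Zp p \<times> Zp p))"
      unfolding AB using uni_map[OF pf(1) finj frng] by simp
    finally show ?thesis .
  qed
  have i1: "inj_on (\<lambda>x::int. x) (Zp p)" "(\<lambda>x::int. x) ` Zp p \<subseteq> Zp p" by auto
  have i2: "inj_on (\<lambda>x::int. (-x) mod p) (Zp p)"
  proof (rule inj_onI)
    fix x y assume xy: "x \<in> Zp p" "y \<in> Zp p" "(-x) mod p = (-y) mod p"
    hence "p dvd (-x) - (-y)" by (simp add: mod_eq_dvd_iff)
    hence "p dvd x - y" by (metis dvd_minus_iff minus_diff_eq diff_minus_eq_add uminus_add_conv_diff add.commute)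
    hence "x mod p = y mod p" by (simp add: mod_eq_dvd_iff)
    thus "x = y" using xy by (simp add: Zp_def)
  qed
  have i2': "(\<lambda>x::int. (-x) mod p) ` Zp p \<subseteq> Zp p" using pf(1) by (auto simp: Zp_def)
  have c6: "distr (measure_pmf P) (count_space UNIV)
      (\<lambda>\<omega>. ((\<xi> 1 \<omega> + \<xi> 2 \<omega> + \<xi> 3 \<omega> + \<xi> 4 \<omega>) mod p,
              (\<xi> 1 \<omega> + \<xi> 2 \<omega> + 2 * \<xi> 3 \<omega> + 2 * \<xi> 4 \<omega>) mod p)) =
      distr (measure_pmf P) (count_space UNIV)
      (\<lambda>\<omega>. ((\<xi> 1 \<omega> + \<xi> 2 \<omega> + \<xi> 3 \<omega> + \<xi> 4 \<omega>) mod p,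
              (- ((\<xi> 1 \<omega> + \<xi> 2 \<omega> + 2 * \<xi> 3 \<omega> + 2 * \<xi> 4 \<omega>) mod p)) mod p))"
    using gen[OF i1] gen[OF i2 i2'] by simp
  show ?thesis
    unfolding Let_def
    by (intro exI[of _ "measure_pmf P"] exI[of _ \<xi>] exI[of _ \<mu>] conjI c1 c2 c3 c4 c5 c6 c7)
qed

end
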